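(* Let $(X,\nu)$ be a probability space and $g:X\to X$ an invertible (mod $0$) measure preserving transformation. Let $Y$ be a compact Riemannian manifold and for each $x\in X$ let $f_x:Y\to Y$ be a diffeomorphism, depending measurably on $x$; let $F(x,y)=(g(x),f_x(y))$ and let $\mu=\int_X\sigma_x\,d\nu(x)$ be an ergodic $F$-invariant probability measure on $X\times Y$, where the $\sigma_x$ are probability measures on $Y$ with $(f_x)_*\sigma_x=\sigma_{g(x)}$. Let $P\subset X\times Y$ be a measurable subset, let $\pi:X\times Y\to X$ be the projection and $B=\pi(P)$, and for $x\in B$ write $P(x)=P\cap(\{x\}\times Y)$. Assume $\nu(B)=\nu_0>0$ and that there is $\sigma_0>0$ such that $\sigma_x(P(x))>\sigma_0$ for almost every $x\in B$. For almost every $z\in P$ let $n_l(z)$ denote the $l$-th return time of $z$ to $P$ under $F$ (for an integer $l\ge1$). Define $$P_n^l(x)=\{z\in P(x)\,:\,n_l(z)\ge n\},\qquad N_l(x)=\max\{n\,:\,\sigma_x(P_n^l(x))>\sigma_0\}.$$ Then $$\int_B N_l(x)\,d\nu<\frac{l}{\sigma_0}<\infty.$$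
   Context: The $l$-th return time $n_l(z)$ of $z\in P$ is the $l$-th smallest positive integer $n$ with $F^n(z)\in P$. Measures $\sigma_x(P(x))$ are understood by identifying $\{x\}\times Y$ with $Y$. *)

theory Defs
  imports "HOL-Probability.Probability"
begin

definition skew :: "('a \<Rightarrow> 'a) \<Rightarrow> ('a \<Rightarrow> 'b \<Rightarrow> 'b) \<Rightarrow> 'a \<times> 'b \<Rightarrow> 'a \<times> 'b" where
  "skew g f z = (g (fst z), f (fst z) (snd z))"

text \<open>l-th return time of z to P under F: the l-th smallest positive n with
  F^n z in P; infinity if there are fewer than l such n.\<close>
definition return_time :: "('c \<Rightarrow> 'c) \<Rightarrow> 'c set \<Rightarrow> nat \<Rightarrow> 'c \<Rightarrow> enat" where
  "return_time F P l z =
     (if \<exists>n. l \<le> card {k \<in> {1..n}. (F ^^ k) z \<in> P}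
      then enat (LEAST n. l \<le> card {k \<in> {1..n}. (F ^^ k) z \<in> P})
      else \<infinity>)"

definition Pnl :: "('a \<times> 'b \<Rightarrow> 'a \<times> 'b) \<Rightarrow> ('a \<times> 'b) set \<Rightarrow> nat \<Rightarrow> nat \<Rightarrow> 'a \<Rightarrow> 'b set" where
  "Pnl F P l n x = {y. (x, y) \<in> P \<and> enat n \<le> return_time F P l (x, y)}"

text \<open>N_l(x) = max { n : sigma_x(P_n^l(x)) > sigma_0 }, taken as a supremum in enat
  (equal to the maximum whenever it exists, infinity if the set is unbounded).\<close>
definition Nl :: "('a \<times> 'b \<Rightarrow> 'a \<times> 'b) \<Rightarrow> ('a \<times> 'b) set \<Rightarrow> ('a \<Rightarrow> 'b measure) \<Rightarrow> real \<Rightarrow> nat \<Rightarrow> 'a \<Rightarrow> enat" where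
  "Nl F P \<sigma> \<sigma>0 l x = Sup {enat n | n. emeasure (\<sigma> x) (Pnl F P l n x) > ennreal \<sigma>0}"

definition ergodic_for :: "'c measure \<Rightarrow> ('c \<Rightarrow> 'c) \<Rightarrow> bool" where
  "ergodic_for M T \<longleftrightarrow> (\<forall>A \<in> sets M. T -` A \<inter> space M = A \<longrightarrow> emeasure M A = 0 \<or> emeasure M A = 1)"

end

theory Submission
  imports Defs
begin

lemma comb_card:
  fixes V :: "nat set"
  assumes "finite V"
  shows "card {k\<in>V. card {v\<in>V. k<v} < l} \<le> l"
proof (cases "{k\<in>V. card {v\<in>V. k<v} < l} = {}")
  case True then show ?thesis by (metis card.empty zero_le)
next
  case False
  define S where "S = {k\<in>V. card {v\<in>V. k<v} < l}"
  have fS: "finite S" using assms by (simp add: S_def)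
  define k0 where "k0 = Min S"
  have "S \<noteq> {}" using False by (simp add: S_def)
  hence k0S: "k0 \<in> S" using fS by (simp add: k0_def Min_in)
  have sub: "S - {k0} \<subseteq> {v\<in>V. k0<v}"
  proof
    fix v assume v: "v \<in> S - {k0}"
    hence "k0 \<le> v" unfolding k0_def using fS Min_le by blast
    with v show "v \<in> {v\<in>V. k0<v}" by (auto simp: S_def)
  qed
  have "card (S - {k0}) \<le> card {v\<in>V. k0<v}"
    by (rule card_mono) (use assms sub in auto)
  moreover have "card {v\<in>V. k0<v} < l" using k0S by (simp add: S_def)
  moreover have "card S = card (S - {k0}) + 1" using k0S fS
    by (metis card_Suc_Diff1 Suc_eq_plus1)
  ultimately show ?thesis by (simp add: S_def[symmetric])
qed

lemma card_ret_mono: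
  "(a::nat) \<le> b \<Longrightarrow> card {k\<in>{1..a}. Q k} \<le> card {k\<in>{1..b}. Q k}"
  by (rule card_mono, rule finite_subset[of _ "{1..b}"]) auto

lemma rt_char:
  "enat (Suc j) \<le> return_time T P l z \<longleftrightarrow> card {k\<in>{1..j}. (T^^k) z \<in> P} < l"
proof (cases "\<exists>n. l \<le> card {k \<in> {1..n}. (T ^^ k) z \<in> P}")
  case True
  define L where "L = (LEAST n. l \<le> card {k \<in> {1..n}. (T ^^ k) z \<in> P})"
  have rt: "return_time T P l z = enat L" unfolding return_time_def L_def by (simp only: if_P[OF True])
  have LI: "l \<le> card {k \<in> {1..L}. (T ^^ k) z \<in> P}"
    unfolding L_def by (rule LeastI_ex[OF True])
  show ?thesis
  proof
    assume "enat (Suc j) \<le> return_time T P l z"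
    hence "Suc j \<le> L" by (simp add: rt)
    thus "card {k\<in>{1..j}. (T^^k) z \<in> P} < l"
      using Least_le[of "\<lambda>n. l \<le> card {k \<in> {1..n}. (T ^^ k) z \<in> P}" j] unfolding L_def[symmetric]
      by linarith
  next
    assume a: "card {k\<in>{1..j}. (T^^k) z \<in> P} < l"
    have "\<not> L \<le> j"
      using card_ret_mono[of L j "\<lambda>k. (T^^k) z \<in> P"] LI a by linarith
    thus "enat (Suc j) \<le> return_time T P l z" by (simp add: rt)
  qed
next
  case False
  have "return_time T P l z = \<infinity>" unfolding return_time_def by (simp only: if_not_P[OF False])
  moreover have "card {k\<in>{1..j}. (T^^k) z \<in> P} < l" using False not_le by blast
  ultimately show ?thesis by simp
qed

lemma measurable_funpow':
  assumes "T \<in> M \<rightarrow>\<^sub>M M" shows "T ^^ n \<in> M \<rightarrow>\<^sub>M M"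
proof (induction n)
  case (Suc n) then show ?case using measurable_comp[OF Suc assms] by (simp add: o_def)
qed simp

lemma distr_funpow:
  assumes "T \<in> M \<rightarrow>\<^sub>M M" "distr M M T = M" shows "distr M M (T ^^ n) = M"
proof (induction n)
  case 0 then show ?case by (simp add: distr_id2[symmetric] id_def)
next
  case (Suc n)
  have "distr M M (T ^^ Suc n) = distr M M (T^^n \<circ> T)" by (simp only: funpow_Suc_right)
  also have "\<dots> = distr (distr M M T) M (T^^n)"
    by (rule distr_distr[symmetric]) (use measurable_funpow' assms in auto)
  also have "\<dots> = M" using assms Suc by simp
  finally show ?case .
qed


lemma suminf_strict_ennreal:
  fixes u v :: "nat \<Rightarrow> ennreal"
  assumes "\<And>m. u m \<le> v m" "u 0 < v 0" "suminf u \<noteq> \<infinity>"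
  shows "suminf u < suminf v"
proof -
  have su: "suminf u = u 0 + (\<Sum>m. u (Suc m))"
    using suminf_offset[of u 1] by (simp add: add.commute)
  have sv: "suminf v = v 0 + (\<Sum>m. v (Suc m))"
    using suminf_offset[of v 1] by (simp add: add.commute)
  have le: "(\<Sum>m. u (Suc m)) \<le> (\<Sum>m. v (Suc m))"
    by (intro suminf_le) (auto simp: assms)
  have fin: "(\<Sum>m. u (Suc m)) \<noteq> \<infinity>" using assms(3) su by (auto simp: top_add)
  have "u 0 + (\<Sum>m. u (Suc m)) < v 0 + (\<Sum>m. u (Suc m))"
    using ennreal_add_left_cancel_less[of "(\<Sum>m. u (Suc m))" "u 0" "v 0"] fin assms(2)
    by (simp add: add.commute)
  also have "\<dots> \<le> v 0 + (\<Sum>m. v (Suc m))" using le by (intro add_left_mono)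
  finally show ?thesis using su sv by simp
qed

theorem theorem3p1:
  fixes \<nu> :: "'a measure" and g :: "'a \<Rightarrow> 'a"
    and f :: "'a \<Rightarrow> 'b::metric_space \<Rightarrow> 'b"
    and \<sigma> :: "'a \<Rightarrow> 'b measure" and \<mu> :: "('a \<times> 'b) measure"
    and P :: "('a \<times> 'b) set" and \<nu>0 \<sigma>0 :: real and l :: nat
  assumes prob: "prob_space \<nu>"
    and g_meas: "g \<in> \<nu> \<rightarrow>\<^sub>M \<nu>" and g_pres: "distr \<nu> \<nu> g = \<nu>"
    and g_inv: "\<exists>g' \<in> \<nu> \<rightarrow>\<^sub>M \<nu>. AE x in \<nu>. g' (g x) = x \<and> g (g' x) = x"
    and Y_compact: "compact (UNIV :: 'b set)"
    and f_homeo: "\<forall>x \<in> space \<nu>. \<exists>h. homeomorphism UNIV UNIV (f x) h"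
    and f_meas: "(\<lambda>z. f (fst z) (snd z)) \<in> \<nu> \<Otimes>\<^sub>M borel \<rightarrow>\<^sub>M borel"
    and \<sigma>_kernel: "\<sigma> \<in> \<nu> \<rightarrow>\<^sub>M prob_algebra borel"
    and \<sigma>_push: "\<forall>x \<in> space \<nu>. distr (\<sigma> x) borel (f x) = \<sigma> (g x)"
    and \<mu>_sets: "sets \<mu> = sets (\<nu> \<Otimes>\<^sub>M borel)"
    and \<mu>_disint: "\<forall>A \<in> sets \<mu>. emeasure \<mu> A = (\<integral>\<^sup>+ x. emeasure (\<sigma> x) (Pair x -` A) \<partial>\<nu>)"
    and \<mu>_prob: "prob_space \<mu>"
    and F_inv: "skew g f \<in> \<mu> \<rightarrow>\<^sub>M \<mu>" "distr \<mu> \<mu> (skew g f) = \<mu>"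
    and F_erg: "ergodic_for \<mu> (skew g f)"
    and P_meas: "P \<in> sets (\<nu> \<Otimes>\<^sub>M borel)"
    and B_meas: "emeasure \<nu> (fst ` P) = ennreal \<nu>0" and \<nu>0_pos: "\<nu>0 > 0"
    and \<sigma>0_pos: "\<sigma>0 > 0"
    and fibres: "AE x in \<nu>. x \<in> fst ` P \<longrightarrow> emeasure (\<sigma> x) (Pair x -` P) > ennreal \<sigma>0"
    and l_pos: "l \<ge> 1"
  shows "(\<integral>\<^sup>+ x \<in> fst ` P. ennreal_of_enat (Nl (skew g f) P \<sigma> \<sigma>0 l x) \<partial>\<nu>)
           < ennreal (real l / \<sigma>0)
         \<and> ennreal (real l / \<sigma>0) < \<infinity>"
proof -
  define T where "T = skew g f"
  define B where "B = fst ` P"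
  define E where "E j = {z \<in> space \<mu>. z \<in> P \<and> enat j \<le> return_time T P l z}" for j
  interpret nu: prob_space \<nu> by (rule prob)
  interpret mu: prob_space \<mu> by (rule \<mu>_prob)
  have sp: "space \<mu> = space \<nu> \<times> UNIV"
    using sets_eq_imp_space_eq[OF \<mu>_sets] by (simp add: space_pair_measure)
  have P_mu[measurable]: "P \<in> sets \<mu>" using P_meas \<mu>_sets by simp
  have T_meas[measurable]: "T \<in> \<mu> \<rightarrow>\<^sub>M \<mu>" using F_inv(1) by (simp add: T_def)
  have Tk_meas[measurable]: "T ^^ k \<in> \<mu> \<rightarrow>\<^sub>M \<mu>" for k by (rule measurable_funpow'[OF T_meas])
  have Tk_distr: "distr \<mu> \<mu> (T ^^ k) = \<mu>" for k
    by (rule distr_funpow[OF T_meas]) (use F_inv(2) in \<open>simp add: T_def\<close>)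
  have E_eq: "E (Suc j) = {z\<in>space \<mu>. z \<in> P \<and> (\<Sum>k\<in>{1..j}. indicator P ((T^^k) z) :: real) < real l}" for j
  proof -
    have "(\<Sum>k\<in>{1..j}. indicator P ((T^^k) z) :: real) = real (card {k\<in>{1..j}. (T^^k) z \<in> P})" for z
    proof -
      have "(\<Sum>k\<in>{1..j}. indicator P ((T^^k) z) :: real) = (\<Sum>k\<in>{1..j}. of_bool ((T^^k) z \<in> P))"
        by (simp add: indicator_def)
      also have "\<dots> = real (card ({1..j} \<inter> {k. (T^^k) z \<in> P}))" by simp
      also have "{1..j} \<inter> {k. (T^^k) z \<in> P} = {k\<in>{1..j}. (T^^k) z \<in> P}" by auto
      finally show ?thesis .
    qed
    then show ?thesis unfolding E_def rt_char by auto
  qed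
  have E_sets[measurable]: "E (Suc j) \<in> sets \<mu>" for j
    unfolding E_eq by measurable
  have E_sub: "E j \<subseteq> space \<mu>" for j by (auto simp: E_def)
  \<comment> \<open>Kac-type bound\<close>
  have kac: "(\<Sum>j<m. emeasure \<mu> (E (Suc j))) \<le> ennreal (real l)" for m
  proof -
    have pw: "(\<Sum>k<m. indicator (E (m-k)) ((T^^k) z) :: ennreal) \<le> ennreal (real l)"
      if z: "z \<in> space \<mu>" for z
    proof -
      define V where "V = {v. v < m \<and> (T^^v) z \<in> P}"
      have fV: "finite V" by (simp add: V_def)
      have "(\<Sum>k<m. indicator (E (m-k)) ((T^^k) z) :: ennreal)
            = (\<Sum>k<m. of_bool ((T^^k) z \<in> E (m-k)))" by (simp add: indicator_def)
      also have "\<dots> = of_nat (card ({..<m} \<inter> {k. (T^^k) z \<in> E (m-k)}))" by simp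
      also have "card ({..<m} \<inter> {k. (T^^k) z \<in> E (m-k)}) \<le> card {k\<in>V. card {v\<in>V. k<v} < l}"
      proof (rule card_mono)
        show "finite {k\<in>V. card {v\<in>V. k<v} < l}" using fV by simp
        show "{..<m} \<inter> {k. (T^^k) z \<in> E (m-k)} \<subseteq> {k\<in>V. card {v\<in>V. k<v} < l}"
        proof
          fix k assume "k \<in> {..<m} \<inter> {k. (T^^k) z \<in> E (m-k)}"
          hence km: "k < m" and kE: "(T^^k) z \<in> E (Suc (m - k - 1))"
            by (auto simp: Suc_diff_Suc)
          have kP: "(T^^k) z \<in> P" using kE by (simp add: E_def)
          have c: "card {i\<in>{1..m-k-1}. (T^^i) ((T^^k) z) \<in> P} < l"
            using kE by (simp add: E_def rt_char)
          have "{v\<in>V. k<v} \<subseteq> (\<lambda>i. i+k) ` {i\<in>{1..m-k-1}. (T^^i) ((T^^k) z) \<in> P}"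
          proof
            fix v assume v: "v \<in> {v\<in>V. k<v}"
            hence "v < m" "k < v" "(T^^v) z \<in> P" by (auto simp: V_def)
            moreover have "(T^^(v-k)) ((T^^k) z) = (T^^v) z"
              using \<open>k<v\<close> funpow_add[of "v-k" k T] by simp
            ultimately show "v \<in> (\<lambda>i. i+k) ` {i\<in>{1..m-k-1}. (T^^i) ((T^^k) z) \<in> P}"
              by (intro image_eqI[of _ _ "v-k"]) auto
          qed
          moreover have fin: "finite {i\<in>{1..m-k-1}. (T^^i) ((T^^k) z) \<in> P}" by simp
          ultimately have "card {v\<in>V. k<v} \<le> card {i\<in>{1..m-k-1}. (T^^i) ((T^^k) z) \<in> P}"
            using card_mono[OF finite_imageI[OF fin]] card_image_le[OF fin] le_trans by blast
          with c km kP show "k \<in> {k\<in>V. card {v\<in>V. k<v} < l}" by (simp add: V_def)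
        qed
      qed
      hence "(of_nat (card ({..<m} \<inter> {k. (T^^k) z \<in> E (m-k)})) :: ennreal) \<le> of_nat l"
        using comb_card[OF fV, of l] by (simp del: of_nat_le_iff)
      finally show ?thesis by (simp add: ennreal_of_nat_eq_real_of_nat)
    qed
    have Em: "E (m - k) \<in> sets \<mu>" if "k < m" for k
      using E_sets[of "m-k-1"] that by (simp add: Suc_diff_Suc)
    have "(\<Sum>j<m. emeasure \<mu> (E (Suc j))) = (\<Sum>k<m. emeasure \<mu> (E (m-k)))"
      by (rule sum.reindex_bij_witness[where i="\<lambda>j. m - Suc j" and j="\<lambda>k. m - Suc k"])
         (auto simp: Suc_diff_Suc)
    also have "\<dots> = (\<Sum>k<m. \<integral>\<^sup>+ z. indicator (E (m-k)) ((T^^k) z) \<partial>\<mu>)"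
    proof (rule sum.cong[OF refl])
      fix k assume "k \<in> {..<m}"
      hence Ek[measurable]: "E (m-k) \<in> sets \<mu>" by (simp add: Em)
      have "emeasure \<mu> (E (m-k)) = \<integral>\<^sup>+ z. indicator (E (m-k)) z \<partial>(distr \<mu> \<mu> (T^^k))"
        by (simp add: Tk_distr)
      also have "\<dots> = \<integral>\<^sup>+ z. indicator (E (m-k)) ((T^^k) z) \<partial>\<mu>"
        by (rule nn_integral_distr) measurable
      finally show "emeasure \<mu> (E (m-k)) = \<integral>\<^sup>+ z. indicator (E (m-k)) ((T^^k) z) \<partial>\<mu>" .
    qed
    also have "\<dots> = \<integral>\<^sup>+ z. (\<Sum>k<m. indicator (E (m-k)) ((T^^k) z)) \<partial>\<mu>"
      by (rule nn_integral_sum[symmetric]) (use Em in measurable)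
    also have "\<dots> \<le> \<integral>\<^sup>+ z. ennreal (real l) \<partial>\<mu>"
      by (rule nn_integral_mono) (use pw in auto)
    also have "\<dots> = ennreal (real l)" by (simp add: mu.emeasure_space_1)
    finally show ?thesis .
  qed
  have kac_sum: "(\<Sum>j. emeasure \<mu> (E (Suc j))) \<le> ennreal (real l)"
    unfolding suminf_eq_SUP by (rule SUP_least) (rule kac)
  have B_sets[measurable]: "B \<in> sets \<nu>"
    using B_meas \<nu>0_pos emeasure_notin_sets[of B \<nu>] by (auto simp: B_def)
  have \<sigma>_sub[measurable]: "\<sigma> \<in> \<nu> \<rightarrow>\<^sub>M subprob_algebra borel"
    using \<sigma>_kernel by (rule measurable_prob_algebraD)
  have \<sigma>_sets: "sets (\<sigma> x) = sets borel" if "x \<in> space \<nu>" for x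
    using measurable_space[OF \<sigma>_kernel that] by (simp add: space_prob_algebra)
  have Pnl_eq: "Pair x -` E j = Pnl (skew g f) P l j x" if "x \<in> space \<nu>" for x j
    using that by (auto simp: E_def Pnl_def sp T_def)
  define a where "a m x = emeasure (\<sigma> x) (Pnl (skew g f) P l (Suc m) x)" for m x
  have Pnl_sets: "Pnl (skew g f) P l (Suc m) x \<in> sets (\<sigma> x)" if "x \<in> space \<nu>" for m x
    using sets_Pair1[of "E (Suc m)" \<nu> borel x] E_sets[of m] \<mu>_sets Pnl_eq[OF that] \<sigma>_sets[OF that]
    by simp
  have a_meas[measurable]: "a m \<in> borel_measurable \<nu>" for m
  proof -
    have "(\<lambda>x. emeasure (\<sigma> x) (Pair x -` E (Suc m))) \<in> borel_measurable \<nu>"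
    proof (rule emeasure_measurable_subprob_algebra2[OF _ \<sigma>_sub])
      have "(SIGMA x:space \<nu>. Pair x -` E (Suc m)) = E (Suc m)"
        using E_sub[of "Suc m"] unfolding sp by blast
      then show "(SIGMA x:space \<nu>. Pair x -` E (Suc m)) \<in> sets (\<nu> \<Otimes>\<^sub>M borel)"
        using E_sets[of m] \<mu>_sets by simp
    qed
    then show ?thesis
      by (rule measurable_cong[THEN iffD1, rotated]) (simp add: a_def Pnl_eq)
  qed
  have a_int: "emeasure \<mu> (E (Suc m)) = (\<integral>\<^sup>+ x. a m x \<partial>\<nu>)" for m
    using \<mu>_disint E_sets[of m] by (auto simp: a_def Pnl_eq intro!: nn_integral_cong)
  define h where "h x = (\<Sum>m. a m x)" for x
  have h_meas[measurable]: "h \<in> borel_measurable \<nu>" unfolding h_def by measurable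
  have h_int: "(\<integral>\<^sup>+ x. h x \<partial>\<nu>) \<le> ennreal (real l)"
    unfolding h_def using kac_sum by (simp add: nn_integral_suminf a_int)
  define b where "b x = (\<Sum>m. if ennreal \<sigma>0 < a m x then 1 else 0 :: ennreal)" for x
  have b_meas[measurable]: "b \<in> borel_measurable \<nu>" unfolding b_def by measurable
  have Pnl_anti: "Pnl (skew g f) P l n x \<subseteq> Pnl (skew g f) P l n' x" if "n' \<le> n" for n n' x
  proof
    fix y assume y: "y \<in> Pnl (skew g f) P l n x"
    have "enat n' \<le> enat n" using that by simp
    thus "y \<in> Pnl (skew g f) P l n' x" using y order_trans unfolding Pnl_def by blast
  qed
  have N_le: "ennreal_of_enat (Nl (skew g f) P \<sigma> \<sigma>0 l x) \<le> b x" if x: "x \<in> space \<nu>" for x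
    unfolding Nl_def ennreal_of_enat_Sup
  proof (rule SUP_least)
    fix y assume "y \<in> {enat n |n. ennreal \<sigma>0 < emeasure (\<sigma> x) (Pnl (skew g f) P l n x)}"
    then obtain n where y: "y = enat n" and n: "ennreal \<sigma>0 < emeasure (\<sigma> x) (Pnl (skew g f) P l n x)"
      by auto
    have "(\<Sum>m<n. (if ennreal \<sigma>0 < a m x then 1 else 0 :: ennreal)) = (\<Sum>m<n. 1)"
    proof (rule sum.cong[OF refl])
      fix m assume "m \<in> {..<n}"
      hence "emeasure (\<sigma> x) (Pnl (skew g f) P l n x) \<le> a m x"
        unfolding a_def by (intro emeasure_mono Pnl_anti Pnl_sets x) auto
      thus "(if ennreal \<sigma>0 < a m x then 1 else 0 :: ennreal) = 1" using n by simp
    qed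
    also have "\<dots> = of_nat n" by simp
    moreover have "(\<Sum>m<n. (if ennreal \<sigma>0 < a m x then 1 else 0 :: ennreal)) \<le> b x"
      unfolding b_def by (rule sum_le_suminf) (auto intro: summableI)
    ultimately have "of_nat n \<le> b x" by simp
    thus "ennreal_of_enat y \<le> b x" by (simp add: y)
  qed
  have b_h: "ennreal \<sigma>0 * b x \<le> h x" for x
    unfolding b_def h_def ennreal_suminf_cmult[symmetric]
    by (intro suminf_le) (auto simp: less_imp_le)
  have a0: "a 0 x = emeasure (\<sigma> x) (Pair x -` P)" if "x \<in> space \<nu>" for x
  proof -
    have "Pnl (skew g f) P l (Suc 0) x = Pair x -` P"
      using l_pos by (auto simp: Pnl_def rt_char)
    thus ?thesis by (simp add: a_def)
  qed
  have fib: "AE x in \<nu>. x \<in> B \<longrightarrow> ennreal \<sigma>0 < a 0 x"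
    using fibres AE_space by eventually_elim (auto simp: B_def a0)
  define F where "F x = ennreal \<sigma>0 * b x * indicator B x" for x
  define G where "G x = h x * indicator B x" for x
  have F_meas[measurable]: "F \<in> borel_measurable \<nu>" unfolding F_def by measurable
  have G_meas[measurable]: "G \<in> borel_measurable \<nu>" unfolding G_def by measurable
  have FG: "F x \<le> G x" for x
    using b_h[of x] by (auto simp: F_def G_def indicator_def)
  have G_le: "(\<integral>\<^sup>+ x. G x \<partial>\<nu>) \<le> ennreal (real l)"
  proof -
    have "(\<integral>\<^sup>+ x. G x \<partial>\<nu>) \<le> (\<integral>\<^sup>+ x. h x \<partial>\<nu>)"
      by (intro nn_integral_mono) (auto simp: G_def indicator_def)
    thus ?thesis using h_int by simp
  qed
  have F_le: "(\<integral>\<^sup>+ x. F x \<partial>\<nu>) \<le> (\<integral>\<^sup>+ x. G x \<partial>\<nu>)"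
    by (intro nn_integral_mono FG)
  have F_fin: "(\<integral>\<^sup>+ x. F x \<partial>\<nu>) \<noteq> \<infinity>"
  proof -
    have "(\<integral>\<^sup>+ x. F x \<partial>\<nu>) \<le> ennreal (real l)" by (rule order_trans[OF F_le G_le])
    thus ?thesis by (auto simp: top_unique)
  qed
  have notAE: "\<not> (AE x in \<nu>. G x \<le> F x)"
  proof
    assume GF: "AE x in \<nu>. G x \<le> F x"
    have Ffin: "AE x in \<nu>. F x \<noteq> \<infinity>" by (rule nn_integral_PInf_AE[OF F_meas F_fin])
    have "AE x in \<nu>. x \<notin> B"
      using GF Ffin fib
    proof eventually_elim
      case (elim x)
      show "x \<notin> B"
      proof
        assume xB: "x \<in> B"
        have "ennreal \<sigma>0 * b x < h x"
          unfolding b_def h_def ennreal_suminf_cmult[symmetric]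
        proof (rule suminf_strict_ennreal)
          show "ennreal \<sigma>0 * (if ennreal \<sigma>0 < a m x then 1 else 0) \<le> a m x" for m
            by (auto simp: less_imp_le)
          show "ennreal \<sigma>0 * (if ennreal \<sigma>0 < a 0 x then 1 else 0) < a 0 x"
            using elim xB by auto
          show "(\<Sum>m. ennreal \<sigma>0 * (if ennreal \<sigma>0 < a m x then 1 else 0)) \<noteq> \<infinity>"
            using elim xB by (simp add: F_def b_def)
        qed
        thus False using elim xB by (simp add: F_def G_def)
      qed
    qed
    moreover have "{x\<in>space \<nu>. \<not> x \<notin> B} = B" using sets.sets_into_space[OF B_sets] by auto
    ultimately have "emeasure \<nu> B = 0"
      using AE_iff_measurable[OF B_sets, of "\<lambda>x. x \<notin> B"] by simp
    thus False using B_meas \<nu>0_pos by (simp add: B_def)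
  qed
  have FG_less: "(\<integral>\<^sup>+ x. F x \<partial>\<nu>) < (\<integral>\<^sup>+ x. G x \<partial>\<nu>)"
    by (rule nn_integral_less[OF F_meas G_meas F_fin]) (simp_all add: FG notAE)
  have Fl: "(\<integral>\<^sup>+ x. F x \<partial>\<nu>) < ennreal (real l)" using FG_less G_le by simp
  have Fcm: "(\<integral>\<^sup>+ x. F x \<partial>\<nu>) = ennreal \<sigma>0 * (\<integral>\<^sup>+ x. b x * indicator B x \<partial>\<nu>)"
    unfolding F_def by (subst nn_integral_cmult[symmetric]) (auto simp: mult.assoc)
  have Nb: "(\<integral>\<^sup>+ x \<in> fst ` P. ennreal_of_enat (Nl (skew g f) P \<sigma> \<sigma>0 l x) \<partial>\<nu>)
        \<le> (\<integral>\<^sup>+ x. b x * indicator B x \<partial>\<nu>)"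
    unfolding B_def by (intro nn_integral_mono) (auto intro: mult_right_mono N_le)
  have Xfin: "(\<integral>\<^sup>+ x. b x * indicator B x \<partial>\<nu>) \<noteq> \<infinity>"
  proof
    assume "(\<integral>\<^sup>+ x. b x * indicator B x \<partial>\<nu>) = \<infinity>"
    hence "(\<integral>\<^sup>+ x. F x \<partial>\<nu>) = \<infinity>" using Fcm \<sigma>0_pos by (simp add: ennreal_mult_eq_top_iff)
    thus False using F_fin by simp
  qed
  obtain r where r: "(\<integral>\<^sup>+ x. b x * indicator B x \<partial>\<nu>) = ennreal r" "r \<ge> 0"
    using Xfin by (cases "(\<integral>\<^sup>+ x. b x * indicator B x \<partial>\<nu>)") auto
  have "ennreal (\<sigma>0 * r) < ennreal (real l)" using Fl Fcm r \<sigma>0_pos by (simp add: ennreal_mult)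
  hence "\<sigma>0 * r < real l" using ennreal_less_iff[of "\<sigma>0 * r" "real l"] r(2) \<sigma>0_pos by simp
  hence "r < real l / \<sigma>0" using \<sigma>0_pos by (simp add: field_simps)
  hence lt: "ennreal r < ennreal (real l / \<sigma>0)" using r ennreal_less_iff[of r "real l / \<sigma>0"] by simp
  have c1: "(\<integral>\<^sup>+ x \<in> fst ` P. ennreal_of_enat (Nl (skew g f) P \<sigma> \<sigma>0 l x) \<partial>\<nu>) < ennreal (real l / \<sigma>0)"
    using Nb lt unfolding r(1) by (rule le_less_trans)
  show ?thesis by (rule conjI[OF c1]) simp
qed

end
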